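(* Let $\mathcal{F}$ be a clique tree forest (CTF) in which every clique tree is valid and calibrated. Let $\mathcal{F}'$ be obtained from $\mathcal{F}$ by a finite sequence of the operations (O1)–(O4) described in the context, each applied to the current forest. Then every clique tree of $\mathcal{F}'$ is a valid clique tree.
   Context: All variables are discrete with finite domains; $D_v$ denotes the domain of variable $v$. A clique tree (CT) is a tree whose nodes are cliques (sets of variables) $C_i$, each carrying a nonnegative clique belief $\beta(C_i)$ (a function of the states of the variables in $C_i$). Each edge $(C_i,C_j)$ carries a sepset $S_{i,j}=C_i\cap C_j$ and a nonnegative sepset belief $\mu(S_{i,j})$. A clique tree forest (CTF) is a disjoint collection of clique trees. A CT is valid if every sepset is nonempty and equals the intersection of its two endpoint cliques, and the running intersection property holds: for every variable $v$, the cliques containing $v$ form a connected subtree. A CT is calibrated if for every edge $(C_i,C_j)$ we have $\sum_{C_i\setminus S_{i,j}}\beta(C_i)=\mu(S_{i,j})=\sum_{C_j\setminus S_{i,j}}\beta(C_j)$. The normalization constant of a calibrated CT is $Z=\sum_{C}\beta(C)$, the sum of any one clique belief over all joint states of that clique's variables (for a calibrated tree this does not depend on the clique chosen). A clique $C$ is non-maximal if $C\subseteq C'$ for some neighbouring clique $C'$. The operations are: (O1) Restriction: replace a CT by a connected subtree of it (keeping the beliefs of the retained cliques and sepsets), or delete a CT entirely. (O2) Exact marginalization of a variable $v$: let $ST_v$ be the (connected) subtree of all cliques containing $v$. Replace $ST_v$ by a single clique $C_c=\big(\bigcup_{C\in ST_v}C\big)\setminus\{v\}$ with belief $\beta(C_c)=\sum_{D_v}\frac{\prod_{C\in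 ST_v}\beta(C)}{\prod_{S\in ST_v}\mu(S)}$, where the denominator ranges over the sepsets of edges inside $ST_v$. Every edge joining a clique of $ST_v$ to a clique $N$ outside $ST_v$ is replaced by an edge between $C_c$ and $N$, with the same sepset and sepset belief. (When $ST_v$ is a single clique this is just summing $v$ out of its belief.) (O3) Local marginalization of a variable $v$: choose a nonempty connected subtree $ST_r$ of the cliques containing $v$. Remove $v$ from every clique containing $v$ that is not in $ST_r$, and from every sepset that contains $v$ and is not an edge inside $ST_r$. Each modified clique $C'=C\setminus\{v\}$ gets belief $\beta(C')=\sum_{D_v}\beta(C)$. Each modified sepset $S'=S\setminus\{v\}$ gets belief $\mu(S')=\sum_{D_v}\mu(S)$. The operation is only allowed if no sepset becomes empty, so that the tree stays connected. (O4) Removal of a non-maximal clique: if $C\subseteq C'$ for a neighbour $C'$, delete $C$ and the edge $(C,C')$. Connect each other neighbour $N$ of $C$ to $C'$, with sepset $N\cap C'$ and sepset belief equal to the former belief $\mu(N\cap C)$. *)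

theory Defs
  imports Complex_Main "HOL-Library.FuncSet"
begin

text \<open>Variables have type 'v, states type 's; D v is the (finite) domain of v.
An assignment is a function 'v => 's; the joint states of a set of variables C
are the extensional assignments PiE C D.  A belief is a real-valued function on
assignments (only its values on PiE C D matter).  Nodes of a clique tree have
type 'n, edges are two-element node sets.\<close>

record ('n, 'v, 's) ctree =
  nodes :: "'n set"
  edges :: "'n set set"
  clq   :: "'n \<Rightarrow> 'v set"
  bel   :: "'n \<Rightarrow> ('v \<Rightarrow> 's) \<Rightarrow> real"
  sep   :: "'n set \<Rightarrow> 'v set"
  sbel  :: "'n set \<Rightarrow> ('v \<Rightarrow> 's) \<Rightarrow> real"

type_synonym ('n, 'v, 's) forest = "('n, 'v, 's) ctree list"

definition adj_on :: "'n set set \<Rightarrow> 'n set \<Rightarrow> ('n \<times> 'n) set" where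
  "adj_on E S = {(a, b). a \<in> S \<and> b \<in> S \<and> {a, b} \<in> E}"

definition conn_on :: "'n set set \<Rightarrow> 'n set \<Rightarrow> bool" where
  "conn_on E S \<longleftrightarrow> (\<forall>a\<in>S. \<forall>b\<in>S. (a, b) \<in> (adj_on E S)\<^sup>*)"

text \<open>Structural well-formedness: the underlying graph is a (finite, nonempty) tree,
i.e. connected with |E| = |N| - 1; cliques are finite sets of variables.\<close>
definition ct_struct :: "('n, 'v, 's) ctree \<Rightarrow> bool" where
  "ct_struct T \<longleftrightarrow>
     finite (nodes T) \<and> nodes T \<noteq> {} \<and>
     edges T \<subseteq> {{a, b} | a b. a \<in> nodes T \<and> b \<in> nodes T \<and> a \<noteq> b} \<and>
     conn_on (edges T) (nodes T) \<and>
     card (edges T) + 1 = card (nodes T) \<and>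
     (\<forall>n\<in>nodes T. finite (clq T n))"

definition ct_nonneg :: "('v \<Rightarrow> 's set) \<Rightarrow> ('n, 'v, 's) ctree \<Rightarrow> bool" where
  "ct_nonneg D T \<longleftrightarrow>
     (\<forall>n\<in>nodes T. \<forall>x\<in>PiE (clq T n) D. 0 \<le> bel T n x) \<and>
     (\<forall>e\<in>edges T. \<forall>x\<in>PiE (sep T e) D. 0 \<le> sbel T e x)"

definition valid_ct :: "('n, 'v, 's) ctree \<Rightarrow> bool" where
  "valid_ct T \<longleftrightarrow> ct_struct T \<and>
     (\<forall>a b. {a, b} \<in> edges T \<longrightarrow> sep T {a, b} \<noteq> {} \<and> sep T {a, b} = clq T a \<inter> clq T b) \<and>
     (\<forall>v. conn_on (edges T) {n \<in> nodes T. v \<in> clq T n})"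

definition marg :: "('v \<Rightarrow> 's set) \<Rightarrow> 'v set \<Rightarrow> 'v set \<Rightarrow> (('v \<Rightarrow> 's) \<Rightarrow> real)
                     \<Rightarrow> ('v \<Rightarrow> 's) \<Rightarrow> real" where
  "marg D C S beta x = (\<Sum>y\<in>PiE (C - S) D. beta (\<lambda>u. if u \<in> S then x u else y u))"

definition calibrated :: "('v \<Rightarrow> 's set) \<Rightarrow> ('n, 'v, 's) ctree \<Rightarrow> bool" where
  "calibrated D T \<longleftrightarrow>
     (\<forall>a b. {a, b} \<in> edges T \<longrightarrow>
        (\<forall>x\<in>PiE (sep T {a, b}) D.
           marg D (clq T a) (sep T {a, b}) (bel T a) x = sbel T {a, b} x \<and>
           marg D (clq T b) (sep T {a, b}) (bel T b) x = sbel T {a, b} x))"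

definition op_restrict :: "('n, 'v, 's) ctree \<Rightarrow> ('n, 'v, 's) ctree \<Rightarrow> bool" where
  "op_restrict T T' \<longleftrightarrow>
     (\<exists>N'. N' \<subseteq> nodes T \<and> N' \<noteq> {} \<and> conn_on (edges T) N' \<and>
        T' = T\<lparr>nodes := N', edges := {e \<in> edges T. e \<subseteq> N'}\<rparr>)"

text \<open>(O2) exact marginalization of v; the merged clique gets a node name c
not used by the remaining nodes.\<close>
definition op_exact :: "('v \<Rightarrow> 's set) \<Rightarrow> ('n, 'v, 's) ctree \<Rightarrow> ('n, 'v, 's) ctree \<Rightarrow> bool" where
  "op_exact D T T' \<longleftrightarrow>
     (\<exists>v c. let ST = {n \<in> nodes T. v \<in> clq T n} in
        ST \<noteq> {} \<and> c \<notin> nodes T - ST \<and>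
        nodes T' = (nodes T - ST) \<union> {c} \<and>
        edges T' = {e \<in> edges T. e \<inter> ST = {}} \<union>
                   {{c, m} | a m. a \<in> ST \<and> m \<notin> ST \<and> {a, m} \<in> edges T} \<and>
        (\<forall>n \<in> nodes T - ST. clq T' n = clq T n \<and> bel T' n = bel T n) \<and>
        clq T' c = (\<Union>n\<in>ST. clq T n) - {v} \<and>
        (\<forall>x\<in>PiE (clq T' c) D.
           bel T' c x =
             (\<Sum>d\<in>D v. (\<Prod>n\<in>ST. bel T n (restrict (x(v := d)) (clq T n)))
                     / (\<Prod>e\<in>{e \<in> edges T. e \<subseteq> ST}. sbel T e (restrict (x(v := d)) (sep T e))))) \<and>
        (\<forall>e\<in>edges T. e \<inter> ST = {} \<longrightarrow> sep T' e = sep T e \<and> sbel T' e = sbel T e) \<and>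
        (\<forall>a m. a \<in> ST \<longrightarrow> m \<notin> ST \<longrightarrow> {a, m} \<in> edges T \<longrightarrow>
           sep T' {c, m} = sep T {a, m} \<and> sbel T' {c, m} = sbel T {a, m}))"

text \<open>(O3) local marginalization of v, keeping v only in the connected subtree STr.\<close>
definition op_local :: "('v \<Rightarrow> 's set) \<Rightarrow> ('n, 'v, 's) ctree \<Rightarrow> ('n, 'v, 's) ctree \<Rightarrow> bool" where
  "op_local D T T' \<longleftrightarrow>
     (\<exists>v STr.
        STr \<noteq> {} \<and> STr \<subseteq> {n \<in> nodes T. v \<in> clq T n} \<and> conn_on (edges T) STr \<and>
        (let modn = (\<lambda>n. n \<in> nodes T \<and> v \<in> clq T n \<and> n \<notin> STr);
             mode = (\<lambda>e. e \<in> edges T \<and> v \<in> sep T e \<and> \<not> e \<subseteq> STr) in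
          (\<forall>e. mode e \<longrightarrow> sep T e - {v} \<noteq> {}) \<and>
          T' = T\<lparr>clq := (\<lambda>n. if modn n then clq T n - {v} else clq T n),
                 bel := (\<lambda>n. if modn n then (\<lambda>x. \<Sum>d\<in>D v. bel T n (x(v := d))) else bel T n),
                 sep := (\<lambda>e. if mode e then sep T e - {v} else sep T e),
                 sbel := (\<lambda>e. if mode e then (\<lambda>x. \<Sum>d\<in>D v. sbel T e (x(v := d))) else sbel T e)\<rparr>))"

definition op_remove :: "('n, 'v, 's) ctree \<Rightarrow> ('n, 'v, 's) ctree \<Rightarrow> bool" where
  "op_remove T T' \<longleftrightarrow>
     (\<exists>C C'. {C, C'} \<in> edges T \<and> clq T C \<subseteq> clq T C' \<and>
        nodes T' = nodes T - {C} \<and>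
        edges T' = {e \<in> edges T. C \<notin> e} \<union> {{m, C'} | m. {m, C} \<in> edges T \<and> m \<noteq> C'} \<and>
        (\<forall>n\<in>nodes T'. clq T' n = clq T n \<and> bel T' n = bel T n) \<and>
        (\<forall>e\<in>edges T. C \<notin> e \<longrightarrow> sep T' e = sep T e \<and> sbel T' e = sbel T e) \<and>
        (\<forall>m. {m, C} \<in> edges T \<longrightarrow> m \<noteq> C' \<longrightarrow>
           sep T' {m, C'} = clq T m \<inter> clq T C' \<and> sbel T' {m, C'} = sbel T {m, C}))"

definition tree_op :: "('v \<Rightarrow> 's set) \<Rightarrow> ('n, 'v, 's) ctree \<Rightarrow> ('n, 'v, 's) ctree \<Rightarrow> bool" where
  "tree_op D T T' \<longleftrightarrow> op_restrict T T' \<or> op_exact D T T' \<or> op_local D T T' \<or> op_remove T T'"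

text \<open>One step on a forest: delete the i-th tree (O1), or replace it by the result
of one operation.\<close>
definition forest_step :: "('v \<Rightarrow> 's set) \<Rightarrow> ('n, 'v, 's) forest \<Rightarrow> ('n, 'v, 's) forest \<Rightarrow> bool" where
  "forest_step D F F' \<longleftrightarrow>
     (\<exists>i < length F. F' = take i F @ drop (Suc i) F \<or>
                     (\<exists>T'. tree_op D (F ! i) T' \<and> F' = F[i := T']))"

end

theory Submission
  imports Defs
begin

definition Ein :: "'n set set \<Rightarrow> 'n set \<Rightarrow> 'n set set" where
  "Ein E X = {e\<in>E. e \<subseteq> X}"

lemma adj_on_sym: "(a,b) \<in> adj_on E S \<Longrightarrow> (b,a) \<in> adj_on E S"
  by (auto simp: adj_on_def insert_commute)

lemma rtrancl_adj_sym: "(a,b) \<in> (adj_on E S)\<^sup>* \<Longrightarrow> (b,a) \<in> (adj_on E S)\<^sup>*"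
proof (induction rule: rtrancl_induct)
  case base then show ?case by simp
next
  case (step y z)
  have "(z,y) \<in> adj_on E S" using step(2) by (rule adj_on_sym)
  then show ?case using step(3) by (rule converse_rtrancl_into_rtrancl)
qed

lemma adj_on_mono: "E \<subseteq> E' \<Longrightarrow> S \<subseteq> S' \<Longrightarrow> adj_on E S \<subseteq> adj_on E' S'"
  by (auto simp: adj_on_def)

lemma rtrancl_adj_mono:
  assumes "(a,b) \<in> (adj_on E S)\<^sup>*" "E \<subseteq> E'" "S \<subseteq> S'"
  shows "(a,b) \<in> (adj_on E' S')\<^sup>*"
proof -
  have "(adj_on E S)\<^sup>* \<subseteq> (adj_on E' S')\<^sup>*" by (rule rtrancl_mono[OF adj_on_mono[OF assms(2,3)]])
  then show ?thesis using assms(1) by (rule subsetD)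
qed

lemma adj_on_Ein: "X \<subseteq> Y \<Longrightarrow> adj_on (Ein E Y) X = adj_on E X"
  by (auto simp: adj_on_def Ein_def)

lemma conn_onD: "conn_on E S \<Longrightarrow> a \<in> S \<Longrightarrow> b \<in> S \<Longrightarrow> (a,b) \<in> (adj_on E S)\<^sup>*"
  unfolding conn_on_def by blast

lemma conn_onI: "(\<And>a b. a \<in> S \<Longrightarrow> b \<in> S \<Longrightarrow> (a,b) \<in> (adj_on E S)\<^sup>*) \<Longrightarrow> conn_on E S"
  unfolding conn_on_def by blast

lemma conn_on_Un:
  assumes "conn_on E A" "conn_on E B" "z \<in> A" "z \<in> B"
  shows "conn_on E (A \<union> B)"
proof -
  have rA: "(a,b) \<in> (adj_on E (A\<union>B))\<^sup>*" if "a\<in>A" "b\<in>A" for a b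
    using rtrancl_adj_mono[OF conn_onD[OF assms(1) that] order_refl Un_upper1] .
  have rB: "(a,b) \<in> (adj_on E (A\<union>B))\<^sup>*" if "a\<in>B" "b\<in>B" for a b
    using rtrancl_adj_mono[OF conn_onD[OF assms(2) that] order_refl Un_upper2] .
  have rz: "(a,z) \<in> (adj_on E (A\<union>B))\<^sup>*" "(z,a) \<in> (adj_on E (A\<union>B))\<^sup>*" if "a \<in> A \<union> B" for a
    using that rA[of a z] rA[of z a] rB[of a z] rB[of z a] assms(3,4) by auto
  show ?thesis
  proof (rule conn_onI)
    fix a b assume ab: "a \<in> A \<union> B" "b \<in> A \<union> B"
    show "(a,b) \<in> (adj_on E (A\<union>B))\<^sup>*"
      by (rule rtrancl_trans[OF rz(1)[OF ab(1)] rz(2)[OF ab(2)]])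
  qed
qed

lemma conn_on_edge: "{a,b} \<in> E \<Longrightarrow> conn_on E {a,b}"
  unfolding conn_on_def adj_on_def by (auto intro!: r_into_rtrancl simp: insert_commute)

lemma finite_Ein: "finite X \<Longrightarrow> finite (Ein E X)"
proof -
  assume "finite X"
  then have "finite (Pow X)" by simp
  moreover have "Ein E X \<subseteq> Pow X" by (auto simp: Ein_def)
  ultimately show ?thesis by (rule finite_subset[rotated])
qed

lemma conn_card_lower:
  assumes "finite X" "X \<noteq> {}" "conn_on E X"
  shows "card X \<le> card (Ein E X) + 1"
proof -
  obtain r where r: "r \<in> X" using assms(2) by blast
  let ?R = "adj_on E X"
  define dist where "dist x = (LEAST k. (r,x) \<in> ?R ^^ k)" for x
  have reach: "\<exists>k. (r,x) \<in> ?R ^^ k" if "x \<in> X" for x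
  proof -
    have "(r,x) \<in> ?R\<^sup>*" using conn_onD[OF assms(3) r that] .
    then show ?thesis by (simp add: rtrancl_power)
  qed
  have ex: "\<exists>y. (y,x) \<in> ?R \<and> dist y < dist x" if "x \<in> X" "x \<noteq> r" for x
  proof -
    have d: "(r,x) \<in> ?R ^^ dist x" unfolding dist_def using reach[OF that(1)] by (rule LeastI_ex)
    have "dist x \<noteq> 0"
    proof
      assume "dist x = 0" then show False using d that(2) by simp
    qed
    then obtain k where k: "dist x = Suc k" by (cases "dist x") auto
    with d obtain y where y: "(r,y) \<in> ?R ^^ k" "(y,x) \<in> ?R" by auto
    have "dist y \<le> k" unfolding dist_def using y(1) by (rule Least_le)
    with y k show ?thesis by auto
  qed
  define s where "s x = (SOME y. (y,x) \<in> ?R \<and> dist y < dist x)" for x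
  define h where "h x = {x, s x}" for x
  have hp: "(s x, x) \<in> ?R \<and> dist (s x) < dist x" if "x \<in> X - {r}" for x
    unfolding s_def using ex[of x] that by - (rule someI_ex, auto)
  have sub: "h ` (X - {r}) \<subseteq> Ein E X"
    using hp by (auto simp: h_def Ein_def adj_on_def insert_commute)
  have inj: "inj_on h (X - {r})"
  proof (rule inj_onI)
    fix x x' assume xx: "x \<in> X - {r}" "x' \<in> X - {r}" "h x = h x'"
    show "x = x'"
    proof (rule ccontr)
      assume ne: "x \<noteq> x'"
      have "{x, s x} = {x', s x'}" using xx(3) by (simp add: h_def)
      with ne have "x = s x'" "s x = x'" by (auto simp: doubleton_eq_iff)
      with hp[OF xx(1)] hp[OF xx(2)] show False by auto
    qed
  qed
  have fin: "finite (Ein E X)" using assms(1) by (rule finite_Ein)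
  have "card (X - {r}) = card (h ` (X - {r}))" by (rule card_image[OF inj, symmetric])
  also have "\<dots> \<le> card (Ein E X)" by (rule card_mono[OF fin sub])
  finally have "card (X - {r}) \<le> card (Ein E X)" .
  then show ?thesis using assms(1) r by (simp add: card_Diff_singleton)
qed

lemma conn_image:
  assumes "conn_on E X"
    and "\<And>a b. {a,b} \<in> E \<Longrightarrow> a \<in> X \<Longrightarrow> b \<in> X \<Longrightarrow> g a \<noteq> g b \<Longrightarrow> {g a, g b} \<in> E'"
  shows "conn_on E' (g ` X)"
proof -
  have st: "(g a, g b) \<in> (adj_on E' (g ` X))\<^sup>*" if "(a,b) \<in> adj_on E X" for a b
    using that assms(2)[of a b] by (cases "g a = g b") (auto simp: adj_on_def intro!: r_into_rtrancl)
  have "(g a, g b) \<in> (adj_on E' (g ` X))\<^sup>*" if "(a,b) \<in> (adj_on E X)\<^sup>*" for a b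
    using that
  proof (induction rule: rtrancl_induct)
    case base then show ?case by simp
  next
    case (step y z) show ?case using step(3) st[OF step(2)] by (rule rtrancl_trans)
  qed
  then show ?thesis using assms(1) unfolding conn_on_def by blast
qed

lemma conn_image2:
  assumes "conn_on E X"
    and "\<And>a b. {a,b} \<in> E \<Longrightarrow> g a \<noteq> g b \<Longrightarrow> {g a, g b} \<in> E'"
  shows "conn_on E' (g ` X)"
  by (rule conn_image[OF assms(1) assms(2)])

lemma ct_struct_conn: "ct_struct T \<Longrightarrow> conn_on (edges T) (nodes T)"
  unfolding ct_struct_def by blast

lemma ct_struct_fin: "ct_struct T \<Longrightarrow> finite (nodes T)"
  unfolding ct_struct_def by blast

lemma ct_struct_card: "ct_struct T \<Longrightarrow> card (edges T) + 1 = card (nodes T)"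
  unfolding ct_struct_def by blast

lemma ct_struct_clq: "ct_struct T \<Longrightarrow> n \<in> nodes T \<Longrightarrow> finite (clq T n)"
  unfolding ct_struct_def by blast

lemma ct_structI:
  assumes "finite (nodes T)" "nodes T \<noteq> {}"
    "edges T \<subseteq> {{a, b} | a b. a \<in> nodes T \<and> b \<in> nodes T \<and> a \<noteq> b}"
    "conn_on (edges T) (nodes T)" "card (edges T) + 1 = card (nodes T)"
    "\<And>n. n \<in> nodes T \<Longrightarrow> finite (clq T n)"
  shows "ct_struct T"
  unfolding ct_struct_def using assms by blast

lemma ct_struct_edge:
  assumes "ct_struct T" "{a,b} \<in> edges T"
  shows "a \<noteq> b" "a \<in> nodes T" "b \<in> nodes T"
proof -
  from assms obtain x y where "{a,b} = {x,y}" "x \<in> nodes T" "y \<in> nodes T" "x \<noteq> y"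
    unfolding ct_struct_def by blast
  then show "a \<noteq> b" "a \<in> nodes T" "b \<in> nodes T" by (auto simp: doubleton_eq_iff)
qed

lemma ct_struct_edge_ex:
  assumes "ct_struct T" "e \<in> edges T"
  shows "\<exists>a b. e = {a,b} \<and> a \<noteq> b \<and> a \<in> nodes T \<and> b \<in> nodes T"
  using assms unfolding ct_struct_def by blast

lemma finite_edges: "ct_struct T \<Longrightarrow> finite (edges T)"
proof -
  assume T: "ct_struct T"
  then have "edges T \<subseteq> Pow (nodes T)" unfolding ct_struct_def by blast
  moreover have "finite (nodes T)" using T by (simp add: ct_struct_def)
  ultimately show ?thesis by (simp add: finite_subset)
qed

lemma card_Ein_upper:
  assumes T: "ct_struct T" and X: "X \<subseteq> nodes T" "X \<noteq> {}"
  shows "card (Ein (edges T) X) + 1 \<le> card X"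
proof -
  let ?N = "nodes T" and ?E = "edges T"
  obtain c where c: "c \<in> X" using X by blast
  define g where "g n = (if n \<in> X then c else n)" for n
  define E'' where "E'' = (\<lambda>e. g ` e) ` (?E - Ein ?E X)"
  have conn: "conn_on E'' (g ` ?N)"
  proof (rule conn_image)
    show "conn_on ?E ?N" using T by (simp add: ct_struct_def)
  next
    fix a b assume ab: "{a,b} \<in> ?E" "a \<in> ?N" "b \<in> ?N" "g a \<noteq> g b"
    have "{a,b} \<notin> Ein ?E X" using ab(4) by (auto simp: Ein_def g_def)
    then show "{g a, g b} \<in> E''" using ab(1) unfolding E''_def
      by (auto intro!: image_eqI[where x="{a,b}"])
  qed
  have gN: "g ` ?N = (?N - X) \<union> {c}" using X c by (auto simp: g_def)
  have fN: "finite ?N" using T by (simp add: ct_struct_def)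
  have fE: "finite ?E" using T by (rule finite_edges)
  have "card (g ` ?N) \<le> card (Ein E'' (g ` ?N)) + 1"
    by (rule conn_card_lower) (use fN gN conn in auto)
  also have "card (Ein E'' (g ` ?N)) \<le> card E''"
    by (rule card_mono) (auto simp: E''_def fE Ein_def)
  also have "card E'' \<le> card (?E - Ein ?E X)" unfolding E''_def using fE by (intro card_image_le) auto
  also have "\<dots> = card ?E - card (Ein ?E X)"
    by (rule card_Diff_subset) (auto simp: Ein_def intro: finite_subset[OF _ fE])
  finally have 1: "card (g ` ?N) \<le> card ?E - card (Ein ?E X) + 1" by simp
  have fX: "finite X" using fN X finite_subset by blast
  have "card (g ` ?N) = card (?N - X) + 1" using gN c fN by simp
  moreover have "card (?N - X) = card ?N - card X" using X fX by (simp add: card_Diff_subset)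
  moreover have "card ?E + 1 = card ?N" using T by (simp add: ct_struct_def)
  moreover have "card (Ein ?E X) \<le> card ?E" using fE by (intro card_mono) (auto simp: Ein_def)
  moreover have "card X \<le> card ?N" using X fN by (simp add: card_mono)
  moreover have "card X > 0" using X fX by auto
  ultimately show ?thesis using 1 by linarith
qed


lemma conn_Int:
  assumes T: "ct_struct T" and A: "A \<subseteq> nodes T" "conn_on (edges T) A"
    and B: "B \<subseteq> nodes T" "conn_on (edges T) B"
  shows "conn_on (edges T) (A \<inter> B)"
proof (cases "A \<inter> B = {}")
  case True then show ?thesis by (simp add: conn_on_def)
next
  case False
  let ?E = "edges T" let ?X = "A \<inter> B"
  have fN: "finite (nodes T)" using T by (simp add: ct_struct_def)
  have fE: "finite ?E" using T by (rule finite_edges)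
  have fA: "finite A" and fB: "finite B" using A B fN finite_subset by blast+
  have fX: "finite ?X" using fA by simp
  show ?thesis
  proof (rule ccontr)
    assume nc: "\<not> conn_on ?E ?X"
    then obtain x y where xy: "x \<in> ?X" "y \<in> ?X" "(x,y) \<notin> (adj_on ?E ?X)\<^sup>*"
      by (auto simp: conn_on_def)
    define P where "P = {z \<in> ?X. (x,z) \<in> (adj_on ?E ?X)\<^sup>*}"
    define Q where "Q = ?X - P"
    have inP: "(x,z) \<in> (adj_on ?E P)\<^sup>*" if "(x,z) \<in> (adj_on ?E ?X)\<^sup>*" for z
      using that
    proof (induction rule: rtrancl_induct)
      case base then show ?case by simp
    next
      case (step u w)
      have uw: "(u,w) \<in> adj_on ?E ?X" using step(2) .
      have xw: "(x,w) \<in> (adj_on ?E ?X)\<^sup>*" using step(1) uw by (rule rtrancl_into_rtrancl)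
      have "(u,w) \<in> adj_on ?E P" using step(1) uw xw by (auto simp: adj_on_def P_def)
      then show ?case using step(3) by (rule rtrancl_into_rtrancl[rotated])
    qed
    have connP: "conn_on ?E P" unfolding conn_on_def
    proof (intro ballI)
      fix a b assume "a \<in> P" "b \<in> P"
      then have "(x,a) \<in> (adj_on ?E P)\<^sup>*" "(x,b) \<in> (adj_on ?E P)\<^sup>*"
        using inP by (auto simp: P_def)
      then show "(a,b) \<in> (adj_on ?E P)\<^sup>*" by (blast intro: rtrancl_trans rtrancl_adj_sym)
    qed
    have xP: "x \<in> P" using xy by (simp add: P_def)
    have PsubX: "P \<subseteq> ?X" unfolding P_def by blast
    have yQ: "y \<in> Q" using xy by (simp add: P_def Q_def)
    have clos: "b \<in> P" if "a \<in> P" "{a,b} \<in> ?E" "b \<in> ?X" for a b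
    proof -
      have "(a,b) \<in> adj_on ?E ?X" using that by (auto simp: adj_on_def P_def)
      moreover have "(x,a) \<in> (adj_on ?E ?X)\<^sup>*" using that by (simp add: P_def)
      ultimately have "(x,b) \<in> (adj_on ?E ?X)\<^sup>*" by (rule rtrancl_into_rtrancl[rotated])
      then show ?thesis using that(3) unfolding P_def by simp
    qed
    have split: "Ein ?E ?X = Ein ?E P \<union> Ein ?E Q"
    proof
      show "Ein ?E P \<union> Ein ?E Q \<subseteq> Ein ?E ?X" using PsubX by (auto simp: Ein_def Q_def)
    next
      show "Ein ?E ?X \<subseteq> Ein ?E P \<union> Ein ?E Q"
      proof
        fix e assume e: "e \<in> Ein ?E ?X"
        then obtain a b where ab: "e = {a,b}" using ct_struct_edge_ex[OF T, of e] unfolding Ein_def by blast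
        have eE: "{a,b} \<in> ?E" "{b,a} \<in> ?E" "a \<in> ?X" "b \<in> ?X" using e ab by (auto simp: Ein_def insert_commute)
        show "e \<in> Ein ?E P \<union> Ein ?E Q"
        proof (cases "a \<in> P")
          case True
          then have "b \<in> P" using clos eE by blast
          then show ?thesis using True e ab by (auto simp: Ein_def)
        next
          case False
          then have "b \<notin> P" using clos eE by blast
          then show ?thesis using False e ab by (auto simp: Ein_def Q_def)
        qed
      qed
    qed
    have disj: "Ein ?E P \<inter> Ein ?E Q = {}"
    proof -
      have "e = {}" if "e \<in> Ein ?E P" "e \<in> Ein ?E Q" for e
        using that by (auto simp: Ein_def Q_def)
      moreover have "{} \<notin> ?E" using ct_struct_edge_ex[OF T] by blast
      ultimately show ?thesis by (auto simp: Ein_def)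
    qed
    have PX: "P \<subseteq> nodes T" "Q \<subseteq> nodes T" using A PsubX by (auto simp: Q_def)
    have Pne: "P \<noteq> {}" using xP by blast
    have Qne: "Q \<noteq> {}" using yQ by blast
    have c1: "card (Ein ?E P) + 1 \<le> card P" by (rule card_Ein_upper[OF T PX(1) Pne])
    have c2: "card (Ein ?E Q) + 1 \<le> card Q" by (rule card_Ein_upper[OF T PX(2) Qne])
    have fP: "finite P" "finite Q" using finite_subset[OF PsubX fX] fX by (auto simp: Q_def)
    have "card (Ein ?E ?X) = card (Ein ?E P) + card (Ein ?E Q)"
      unfolding split by (rule card_Un_disjoint[OF finite_Ein[OF fP(1)] finite_Ein[OF fP(2)] disj])
    moreover have "card ?X = card P + card Q"
    proof -
      have "?X = P \<union> Q" "P \<inter> Q = {}" using PsubX by (auto simp: Q_def)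
      then show ?thesis using fP by (simp add: card_Un_disjoint)
    qed
    ultimately have up: "card (Ein ?E ?X) + 2 \<le> card ?X" using c1 c2 by linarith
    obtain z where z: "z \<in> A" "z \<in> B" using False by blast
    have cAB: "conn_on ?E (A \<union> B)" using conn_on_Un[OF A(2) B(2) z] .
    have ABs: "A \<union> B \<subseteq> nodes T" using A(1) B(1) by blast
    have ABne: "A \<union> B \<noteq> {}" "A \<noteq> {}" "B \<noteq> {}" using z by blast+
    have u: "card (Ein ?E (A\<union>B)) + 1 \<le> card (A \<union> B)"
      by (rule card_Ein_upper[OF T ABs ABne(1)])
    have lA: "card A \<le> card (Ein ?E A) + 1" by (rule conn_card_lower[OF fA ABne(2) A(2)])
    have lB: "card B \<le> card (Ein ?E B) + 1" by (rule conn_card_lower[OF fB ABne(3) B(2)])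
    have s1: "Ein ?E A \<union> Ein ?E B \<subseteq> Ein ?E (A\<union>B)" by (auto simp: Ein_def)
    have s2: "Ein ?E A \<inter> Ein ?E B = Ein ?E ?X" by (auto simp: Ein_def)
    have "card (Ein ?E A \<union> Ein ?E B) \<le> card (Ein ?E (A\<union>B))"
      using s1 by (intro card_mono finite_Ein) (use fA fB in auto)
    moreover have "card (Ein ?E A) + card (Ein ?E B) = card (Ein ?E A \<union> Ein ?E B) + card (Ein ?E ?X)"
      using card_Un_Int[OF finite_Ein[OF fA] finite_Ein[OF fB]] s2 by simp
    moreover have "card A + card B = card (A \<union> B) + card ?X"
      using card_Un_Int[OF fA fB] .
    ultimately show False using up u lA lB by linarith
  qed
qed

lemma valid_ctI:
  "ct_struct T \<Longrightarrow> (\<And>a b. {a,b} \<in> edges T \<Longrightarrow> sep T {a,b} \<noteq> {} \<and> sep T {a,b} = clq T a \<inter> clq T b)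
   \<Longrightarrow> (\<And>v. conn_on (edges T) {n \<in> nodes T. v \<in> clq T n}) \<Longrightarrow> valid_ct T"
  unfolding valid_ct_def by blast

lemma valid_struct: "valid_ct T \<Longrightarrow> ct_struct T"
  unfolding valid_ct_def by blast

lemma valid_sep: "valid_ct T \<Longrightarrow> {a,b} \<in> edges T \<Longrightarrow> sep T {a,b} \<noteq> {} \<and> sep T {a,b} = clq T a \<inter> clq T b"
  unfolding valid_ct_def by blast

lemma valid_rip: "valid_ct T \<Longrightarrow> conn_on (edges T) {n \<in> nodes T. v \<in> clq T n}"
  unfolding valid_ct_def by blast

lemma rtrancl_first: "(a,b) \<in> R\<^sup>* \<Longrightarrow> a \<noteq> b \<Longrightarrow> \<exists>c. (a,c) \<in> R"
  by (induction rule: converse_rtrancl_induct) auto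

lemma key:
  assumes V: "valid_ct T" and ST: "ST \<subseteq> nodes T" "conn_on (edges T) ST"
    and a: "a \<in> ST" and m: "m \<notin> ST" "{a,m} \<in> edges T"
    and n: "n \<in> ST" and u: "u \<in> clq T n" "u \<in> clq T m"
  shows "u \<in> clq T a"
proof -
  have T: "ct_struct T" using V by (rule valid_struct)
  let ?E = "edges T"
  define Su where "Su = {n \<in> nodes T. u \<in> clq T n}"
  have cSu: "conn_on ?E Su" unfolding Su_def by (rule valid_rip[OF V])
  have mN: "m \<in> nodes T" using ct_struct_edge[OF T m(2)] by simp
  have cY: "conn_on ?E (ST \<union> {a,m})"
    by (rule conn_on_Un[OF ST(2) conn_on_edge[OF m(2)] a]) simp
  have eq: "ST \<union> {a,m} = insert m ST" using a by auto
  have Sus: "Su \<subseteq> nodes T" unfolding Su_def by blast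
  have ins: "insert m ST \<subseteq> nodes T" using ST(1) mN by blast
  have cY': "conn_on ?E (insert m ST)" using cY unfolding eq .
  have cI: "conn_on ?E (Su \<inter> insert m ST)" by (rule conn_Int[OF T Sus cSu ins cY'])
  have mem: "m \<in> Su \<inter> insert m ST" "n \<in> Su \<inter> insert m ST"
    using u mN n ST by (auto simp: Su_def)
  have mn: "(m,n) \<in> (adj_on ?E (Su \<inter> insert m ST))\<^sup>*" by (rule conn_onD[OF cI mem])
  have "m \<noteq> n" using m n by auto
  then obtain a' where a': "(m,a') \<in> adj_on ?E (Su \<inter> insert m ST)"
    using rtrancl_first[OF mn] by blast
  then have a'E: "{m,a'} \<in> ?E" "a' \<in> Su" "a' \<in> insert m ST" by (auto simp: adj_on_def)
  have "a' \<noteq> m" using ct_struct_edge[OF T a'E(1)] by simp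
  then have a'ST: "a' \<in> ST" using a'E by simp
  show ?thesis
  proof (cases "a' = a")
    case True then show ?thesis using a'E Su_def by simp
  next
    case False
    have fN: "finite (nodes T)" using T by (rule ct_struct_fin)
    have fST: "finite ST" using finite_subset[OF ST(1) fN] .
    have fE: "finite ?E" using T by (rule finite_edges)
    have sub: "Ein ?E ST \<union> {{a,m},{a',m}} \<subseteq> Ein ?E (insert m ST)"
      using m a a'ST a'E(1) by (auto simp: Ein_def insert_commute)
    have dis: "Ein ?E ST \<inter> {{a,m},{a',m}} = {}" using m by (auto simp: Ein_def)
    have am: "a \<noteq> m" using a m by auto
    have two: "card {{a,m},{a',m}} = 2" using False am by (auto simp: doubleton_eq_iff)
    have f2: "finite {{a,m},{a',m}}" by simp
    have fins: "finite (insert m ST)" using fST by simp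
    have "card (Ein ?E ST) + 2 = card (Ein ?E ST \<union> {{a,m},{a',m}})"
      using card_Un_disjoint[OF finite_Ein[OF fST] f2 dis] two by simp
    also have "\<dots> \<le> card (Ein ?E (insert m ST))"
      by (rule card_mono[OF finite_Ein[OF fins] sub])
    finally have 1: "card (Ein ?E ST) + 2 \<le> card (Ein ?E (insert m ST))" .
    have STne: "ST \<noteq> {}" using a by blast
    have 2: "card ST \<le> card (Ein ?E ST) + 1" by (rule conn_card_lower[OF fST STne ST(2)])
    have 3: "card (Ein ?E (insert m ST)) + 1 \<le> card (insert m ST)"
      by (rule card_Ein_upper[OF T ins insert_not_empty])
    have "card (insert m ST) = card ST + 1" using fST m by simp
    then show ?thesis using 1 2 3 by linarith
  qed
qed


lemma restrict_valid:
  assumes V: "valid_ct T" and R: "op_restrict T T'"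
  shows "valid_ct T'"
proof -
  from R obtain N' where N': "N' \<subseteq> nodes T" "N' \<noteq> {}" "conn_on (edges T) N'"
    and T': "T' = T\<lparr>nodes := N', edges := {e \<in> edges T. e \<subseteq> N'}\<rparr>"
    unfolding op_restrict_def by blast
  have T: "ct_struct T" using V by (rule valid_struct)
  have fN': "finite N'" using N'(1) T finite_subset unfolding ct_struct_def by blast
  have eq: "{e \<in> edges T. e \<subseteq> N'} = Ein (edges T) N'" by (simp add: Ein_def)
  have card: "card (Ein (edges T) N') + 1 = card N'"
    using conn_card_lower[OF fN' N'(2) N'(3)] card_Ein_upper[OF T N'(1,2)] by linarith
  have conn': "conn_on (Ein (edges T) N') N'" using N'(3) by (simp add: conn_on_def adj_on_Ein)
  have pairs: "Ein (edges T) N' \<subseteq> {{a, b} | a b. a \<in> N' \<and> b \<in> N' \<and> a \<noteq> b}"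
  proof
    fix e assume e: "e \<in> Ein (edges T) N'"
    then obtain a b where "e = {a,b}" "a \<noteq> b" using ct_struct_edge_ex[OF T, of e] unfolding Ein_def by blast
    then show "e \<in> {{a, b} | a b. a \<in> N' \<and> b \<in> N' \<and> a \<noteq> b}" using e by (auto simp: Ein_def)
  qed
  have st: "ct_struct T'"
  proof (rule ct_structI)
    show "finite (nodes T')" using fN' T' by simp
    show "nodes T' \<noteq> {}" using N'(2) T' by simp
    show "edges T' \<subseteq> {{a, b} | a b. a \<in> nodes T' \<and> b \<in> nodes T' \<and> a \<noteq> b}" using pairs T' eq by simp
    show "conn_on (edges T') (nodes T')" using conn' T' eq by simp
    show "card (edges T') + 1 = card (nodes T')" using card T' eq by simp
    fix n assume "n \<in> nodes T'"
    then show "finite (clq T' n)" using ct_struct_clq[OF T] N'(1) T' by auto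
  qed
  have rip: "conn_on (Ein (edges T) N') {n \<in> N'. v \<in> clq T n}" for v
  proof -
    have e1: "{n \<in> N'. v \<in> clq T n} = N' \<inter> {n \<in> nodes T. v \<in> clq T n}" using N'(1) by auto
    have "conn_on (edges T) {n \<in> N'. v \<in> clq T n}" unfolding e1
      using conn_Int[OF T N'(1,3) _ valid_rip[OF V, of v]] by auto
    then show ?thesis unfolding conn_on_def by (subst adj_on_Ein) auto
  qed
  show ?thesis
  proof (rule valid_ctI)
    show "ct_struct T'" by (rule st)
  next
    fix a b assume "{a,b} \<in> edges T'"
    then have ab: "{a,b} \<in> edges T" using T' by simp
    have "sep T' = sep T" "clq T' = clq T" using T' by simp_all
    note eqs = this
    show "sep T' {a,b} \<noteq> {} \<and> sep T' {a,b} = clq T' a \<inter> clq T' b"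
      unfolding eqs by (rule valid_sep[OF V ab])
  next
    fix u show "conn_on (edges T') {n \<in> nodes T'. u \<in> clq T' n}"
      using rip[of u] T' eq by simp
  qed
qed

lemma local_valid:
  assumes V: "valid_ct T" and L: "op_local D T T'"
  shows "valid_ct T'"
proof -
  from L obtain v STr where H: "STr \<noteq> {} \<and> STr \<subseteq> {n \<in> nodes T. v \<in> clq T n} \<and> conn_on (edges T) STr \<and>
        (let modn = (\<lambda>n. n \<in> nodes T \<and> v \<in> clq T n \<and> n \<notin> STr);
             mode = (\<lambda>e. e \<in> edges T \<and> v \<in> sep T e \<and> \<not> e \<subseteq> STr) in
          (\<forall>e. mode e \<longrightarrow> sep T e - {v} \<noteq> {}) \<and>
          T' = T\<lparr>clq := (\<lambda>n. if modn n then clq T n - {v} else clq T n),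
                 bel := (\<lambda>n. if modn n then (\<lambda>x. \<Sum>d\<in>D v. bel T n (x(v := d))) else bel T n),
                 sep := (\<lambda>e. if mode e then sep T e - {v} else sep T e),
                 sbel := (\<lambda>e. if mode e then (\<lambda>x. \<Sum>d\<in>D v. sbel T e (x(v := d))) else sbel T e)\<rparr>)"
    unfolding op_local_def by (elim exE) (rule that)
  note H' = H[unfolded Let_def]
  have S1: "STr \<noteq> {}" using H' by (elim conjE)
  have S2: "STr \<subseteq> {n \<in> nodes T. v \<in> clq T n}" using H' by (elim conjE)
  have S3: "conn_on (edges T) STr" using H' by (elim conjE)
  note S = S1 S2 S3
  have ne: "\<forall>e. e \<in> edges T \<and> v \<in> sep T e \<and> \<not> e \<subseteq> STr \<longrightarrow> sep T e - {v} \<noteq> {}"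
    using H' by (elim conjE)
  have T': "T' = T\<lparr>clq := (\<lambda>n. if n \<in> nodes T \<and> v \<in> clq T n \<and> n \<notin> STr then clq T n - {v} else clq T n),
                 bel := (\<lambda>n. if n \<in> nodes T \<and> v \<in> clq T n \<and> n \<notin> STr then (\<lambda>x. \<Sum>d\<in>D v. bel T n (x(v := d))) else bel T n),
                 sep := (\<lambda>e. if e \<in> edges T \<and> v \<in> sep T e \<and> \<not> e \<subseteq> STr then sep T e - {v} else sep T e),
                 sbel := (\<lambda>e. if e \<in> edges T \<and> v \<in> sep T e \<and> \<not> e \<subseteq> STr then (\<lambda>x. \<Sum>d\<in>D v. sbel T e (x(v := d))) else sbel T e)\<rparr>"
    using H' by (elim conjE)
  have T: "ct_struct T" using V by (rule valid_struct)
  have nT': "nodes T' = nodes T" "edges T' = edges T" using T' by simp_all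
  have st: "ct_struct T'"
  proof (rule ct_structI)
    show "finite (nodes T')" using ct_struct_fin[OF T] nT' by simp
    show "nodes T' \<noteq> {}" using T nT' unfolding ct_struct_def by simp
    show "edges T' \<subseteq> {{a, b} | a b. a \<in> nodes T' \<and> b \<in> nodes T' \<and> a \<noteq> b}"
      using T nT' unfolding ct_struct_def by simp
    show "conn_on (edges T') (nodes T')" using ct_struct_conn[OF T] nT' by simp
    show "card (edges T') + 1 = card (nodes T')" using ct_struct_card[OF T] nT' by simp
    fix n assume "n \<in> nodes T'"
    then have "finite (clq T n)" using ct_struct_clq[OF T] nT' by simp
    then show "finite (clq T' n)" unfolding T' by simp
  qed
  have sepc: "sep T' {a,b} \<noteq> {} \<and> sep T' {a,b} = clq T' a \<inter> clq T' b" if ab: "{a,b} \<in> edges T'" for a b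
  proof -
    have abE: "{a,b} \<in> edges T" using ab T' by simp
    have sv0: "sep T {a,b} \<noteq> {} \<and> sep T {a,b} = clq T a \<inter> clq T b" using valid_sep[OF V abE] .
    then have sv: "sep T {a,b} \<noteq> {}" "sep T {a,b} = clq T a \<inter> clq T b" by blast+
    have aN: "a \<in> nodes T" "b \<in> nodes T" using ct_struct_edge[OF T abE] by auto
    show ?thesis
    proof (cases "v \<in> sep T {a,b} \<and> \<not> {a,b} \<subseteq> STr")
      case True
      then show ?thesis using ne abE sv aN unfolding T' by auto
    next
      case False
      then show ?thesis using sv aN abE unfolding T' by auto
    qed
  qed
  have rip: "conn_on (edges T') {n \<in> nodes T'. u \<in> clq T' n}" for u
  proof (cases "u = v")
    case True
    have "{n \<in> nodes T'. u \<in> clq T' n} = STr" using S(2) True unfolding T' by auto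
    then show ?thesis using S(3) T' by simp
  next
    case False
    have "{n \<in> nodes T'. u \<in> clq T' n} = {n \<in> nodes T. u \<in> clq T n}" using False unfolding T' by auto
    then show ?thesis using valid_rip[OF V, of u] T' by simp
  qed
  show ?thesis by (rule valid_ctI[OF st sepc rip])
qed

lemma remove_valid:
  assumes V: "valid_ct T" and R: "op_remove T T'"
  shows "valid_ct T'"
proof -
  let ?N = "nodes T" and ?E = "edges T"
  from R obtain C C' where H: "{C, C'} \<in> edges T \<and> clq T C \<subseteq> clq T C' \<and>
        nodes T' = nodes T - {C} \<and>
        edges T' = {e \<in> edges T. C \<notin> e} \<union> {{m, C'} | m. {m, C} \<in> edges T \<and> m \<noteq> C'} \<and>
        (\<forall>n\<in>nodes T'. clq T' n = clq T n \<and> bel T' n = bel T n) \<and>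
        (\<forall>e\<in>edges T. C \<notin> e \<longrightarrow> sep T' e = sep T e \<and> sbel T' e = sbel T e) \<and>
        (\<forall>m. {m, C} \<in> edges T \<longrightarrow> m \<noteq> C' \<longrightarrow>
           sep T' {m, C'} = clq T m \<inter> clq T C' \<and> sbel T' {m, C'} = sbel T {m, C})"
    unfolding op_remove_def by (elim exE) (rule that)
  have CC1: "{C, C'} \<in> ?E" using H by (elim conjE)
  have CC2: "clq T C \<subseteq> clq T C'" using H by (elim conjE)
  note CC = CC1 CC2
  have N': "nodes T' = ?N - {C}" using H by (elim conjE)
  have E': "edges T' = {e \<in> ?E. C \<notin> e} \<union> {{m, C'} | m. {m, C} \<in> ?E \<and> m \<noteq> C'}"
    using H by (elim conjE)
  have cl0: "\<forall>n\<in>nodes T'. clq T' n = clq T n \<and> bel T' n = bel T n" using H by (elim conjE)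
  then have cl: "\<forall>n\<in>nodes T'. clq T' n = clq T n" by blast
  have so0: "\<forall>e\<in>edges T. C \<notin> e \<longrightarrow> sep T' e = sep T e \<and> sbel T' e = sbel T e" using H by (elim conjE)
  then have so: "\<forall>e\<in>?E. C \<notin> e \<longrightarrow> sep T' e = sep T e" by blast
  have sn0: "\<forall>m. {m, C} \<in> edges T \<longrightarrow> m \<noteq> C' \<longrightarrow>
           sep T' {m, C'} = clq T m \<inter> clq T C' \<and> sbel T' {m, C'} = sbel T {m, C}" using H by (elim conjE)
  then have sn: "\<forall>m. {m, C} \<in> ?E \<longrightarrow> m \<noteq> C' \<longrightarrow> sep T' {m, C'} = clq T m \<inter> clq T C'" by blast
  have T: "ct_struct T" using V by (rule valid_struct)
  have fN: "finite ?N" using T by (simp add: ct_struct_def)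
  have fE: "finite ?E" using T by (rule finite_edges)
  have CN: "C \<noteq> C'" "C \<in> ?N" "C' \<in> ?N" using ct_struct_edge[OF T CC(1)] by auto
  define g where "g n = (if n = C then C' else n)" for n
  have econd: "{g a, g b} \<in> edges T'" if "{a,b} \<in> ?E" "g a \<noteq> g b" for a b
  proof -
    have ab: "a \<noteq> b" using ct_struct_edge[OF T that(1)] by simp
    show ?thesis
    proof (cases "a = C")
      case True
      then have "b \<noteq> C'" "b \<noteq> C" using that ab by (auto simp: g_def)
      moreover have "{b, C} \<in> ?E" using that True by (simp add: insert_commute)
      ultimately show ?thesis unfolding E' using True by (auto simp: g_def insert_commute)
    next
      case False
      show ?thesis
      proof (cases "b = C")
        case True
        then have "a \<noteq> C'" using that False by (auto simp: g_def)
        then show ?thesis unfolding E' using True False that by (auto simp: g_def)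
      next
        case False2: False
        then show ?thesis unfolding E' using False that by (auto simp: g_def)
      qed
    qed
  qed
  have gN: "g ` ?N = ?N - {C}" using CN by (auto simp: g_def)
  have connN: "conn_on (edges T') (nodes T')"
    unfolding N' gN[symmetric]
    by (rule conn_image2[OF ct_struct_conn[OF T] econd])
  have sub: "edges T' \<subseteq> (\<lambda>e. g ` e) ` (?E - {{C,C'}})"
  proof
    fix e assume "e \<in> edges T'"
    then consider "e \<in> ?E" "C \<notin> e" | m where "e = {m,C'}" "{m, C} \<in> ?E" "m \<noteq> C'"
      unfolding E' by blast
    then show "e \<in> (\<lambda>e. g ` e) ` (?E - {{C,C'}})"
    proof cases
      case 1
      then have "g ` e = e" by (auto simp: g_def)
      then show ?thesis using 1 CN by (auto intro!: image_eqI[where x=e])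
    next
      case 2
      have "m \<noteq> C" using ct_struct_edge[OF T 2(2)] by simp
      then have "g ` {m,C} = e" "{m,C} \<noteq> {C,C'}" using 2 by (auto simp: g_def doubleton_eq_iff)
      then show ?thesis using 2 by (auto intro!: image_eqI[where x="{m,C}"])
    qed
  qed
  have fE': "finite (edges T')" using finite_subset[OF sub] fE by blast
  have "card (edges T') \<le> card (?E - {{C,C'}})"
  proof -
    have "card (edges T') \<le> card ((\<lambda>e. g ` e) ` (?E - {{C,C'}}))"
      using sub fE by (intro card_mono) auto
    also have "\<dots> \<le> card (?E - {{C,C'}})" using fE by (intro card_image_le) auto
    finally show ?thesis .
  qed
  also have "\<dots> = card ?E - 1" using CC fE by simp
  finally have up: "card (edges T') \<le> card ?E - 1" .
  have fN': "finite (nodes T')" using N' fN by simp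
  have neN': "nodes T' \<noteq> {}" using N' CN by auto
  have low: "card (nodes T') \<le> card (edges T') + 1"
    using conn_card_lower[OF fN' neN' connN] card_mono[OF fE', of "Ein (edges T') (nodes T')"]
    by (auto simp: Ein_def)
  have cN': "card (nodes T') = card ?N - 1" using N' CN fN by simp
  have cE: "card ?E + 1 = card ?N" using T by (simp add: ct_struct_def)
  have Epos: "card ?E > 0" using CC(1) fE by (auto simp: card_gt_0_iff)
  have card: "card (edges T') + 1 = card (nodes T')" using up low cN' cE Epos by linarith
  have pairs: "edges T' \<subseteq> {{a, b} | a b. a \<in> nodes T' \<and> b \<in> nodes T' \<and> a \<noteq> b}"
  proof
    fix e assume "e \<in> edges T'"
    then consider "e \<in> ?E" "C \<notin> e" | m where "e = {m,C'}" "{m, C} \<in> ?E" "m \<noteq> C'"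
      unfolding E' by blast
    then show "e \<in> {{a, b} | a b. a \<in> nodes T' \<and> b \<in> nodes T' \<and> a \<noteq> b}"
    proof cases
      case 1
      then obtain a b where "e = {a,b}" "a \<noteq> b" "a \<in> ?N" "b \<in> ?N" using ct_struct_edge_ex[OF T] by blast
      then show ?thesis using 1 N' by auto
    next
      case 2
      then show ?thesis using ct_struct_edge[OF T 2(2)] N' CN by auto
    qed
  qed
  have st: "ct_struct T'"
    by (rule ct_structI[OF fN' neN' pairs connN card]) (use cl ct_struct_clq[OF T] N' in auto)
  have sepc: "sep T' {a,b} \<noteq> {} \<and> sep T' {a,b} = clq T' a \<inter> clq T' b" if ab: "{a,b} \<in> edges T'" for a b
  proof -
    from ab consider "{a,b} \<in> ?E" "C \<notin> {a,b}" | m where "{a,b} = {m,C'}" "{m, C} \<in> ?E" "m \<noteq> C'"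
      unfolding E' by blast
    then show ?thesis
    proof cases
      case 1
      have "a \<in> nodes T'" "b \<in> nodes T'" using ct_struct_edge[OF T 1(1)] 1(2) N' by auto
      moreover have "sep T {a,b} \<noteq> {} \<and> sep T {a,b} = clq T a \<inter> clq T b" using valid_sep[OF V 1(1)] .
      ultimately show ?thesis using 1 so cl by auto
    next
      case 2
      have mN: "m \<in> ?N" "m \<noteq> C" using ct_struct_edge[OF T 2(2)] by auto
      have "sep T {m,C} \<noteq> {} \<and> sep T {m,C} = clq T m \<inter> clq T C" using valid_sep[OF V 2(2)] .
      then have ne: "clq T m \<inter> clq T C' \<noteq> {}" using CC(2) by blast
      have nodes: "m \<in> nodes T'" "C' \<in> nodes T'" using mN CN N' by auto
      have "sep T' {a,b} = clq T m \<inter> clq T C'" using sn 2 by simp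
      moreover have "clq T' a \<inter> clq T' b = clq T m \<inter> clq T C'"
        using 2(1) cl nodes by (auto simp: doubleton_eq_iff)
      ultimately show ?thesis using ne by simp
    qed
  qed
  have rip: "conn_on (edges T') {n \<in> nodes T'. u \<in> clq T' n}" for u
  proof -
    define Su where "Su = {n \<in> ?N. u \<in> clq T n}"
    have cSu: "conn_on ?E Su" unfolding Su_def by (rule valid_rip[OF V])
    have "g ` Su = Su - {C}" using CN CC(2) by (auto simp: g_def Su_def)
    also have "\<dots> = {n \<in> nodes T'. u \<in> clq T' n}" using N' cl by (auto simp: Su_def)
    finally have eq: "g ` Su = {n \<in> nodes T'. u \<in> clq T' n}" .
    show ?thesis unfolding eq[symmetric] by (rule conn_image2[OF cSu econd])
  qed
  show ?thesis by (rule valid_ctI[OF st sepc rip])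
qed


lemma exact_valid:
  assumes V: "valid_ct T" and X: "op_exact D T T'"
  shows "valid_ct T'"
proof -
  let ?N = "nodes T" and ?E = "edges T"
  from X obtain v c where H: "let ST = {n \<in> nodes T. v \<in> clq T n} in
        ST \<noteq> {} \<and> c \<notin> nodes T - ST \<and>
        nodes T' = (nodes T - ST) \<union> {c} \<and>
        edges T' = {e \<in> edges T. e \<inter> ST = {}} \<union>
                   {{c, m} | a m. a \<in> ST \<and> m \<notin> ST \<and> {a, m} \<in> edges T} \<and>
        (\<forall>n \<in> nodes T - ST. clq T' n = clq T n \<and> bel T' n = bel T n) \<and>
        clq T' c = (\<Union>n\<in>ST. clq T n) - {v} \<and>
        (\<forall>x\<in>PiE (clq T' c) D.
           bel T' c x =
             (\<Sum>d\<in>D v. (\<Prod>n\<in>ST. bel T n (restrict (x(v := d)) (clq T n)))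
                     / (\<Prod>e\<in>{e \<in> edges T. e \<subseteq> ST}. sbel T e (restrict (x(v := d)) (sep T e))))) \<and>
        (\<forall>e\<in>edges T. e \<inter> ST = {} \<longrightarrow> sep T' e = sep T e \<and> sbel T' e = sbel T e) \<and>
        (\<forall>a m. a \<in> ST \<longrightarrow> m \<notin> ST \<longrightarrow> {a, m} \<in> edges T \<longrightarrow>
           sep T' {c, m} = sep T {a, m} \<and> sbel T' {c, m} = sbel T {a, m})"
    using X unfolding op_exact_def by (elim exE) (rule that)
  define ST where "ST = {n \<in> nodes T. v \<in> clq T n}"
  note H' = H[unfolded Let_def ST_def[symmetric]]
  have STd: "ST = {n \<in> ?N. v \<in> clq T n}" by (rule ST_def)
  have ne: "ST \<noteq> {}" using H' by (elim conjE)
  have cc: "c \<notin> ?N - ST" using H' by (elim conjE)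
  have N': "nodes T' = (?N - ST) \<union> {c}" using H' by (elim conjE)
  have E': "edges T' = {e \<in> ?E. e \<inter> ST = {}} \<union> {{c, m} | a m. a \<in> ST \<and> m \<notin> ST \<and> {a, m} \<in> ?E}"
    using H' by (elim conjE)
  have clo0: "\<forall>n \<in> nodes T - ST. clq T' n = clq T n \<and> bel T' n = bel T n" using H' by (elim conjE)
  then have clo: "\<forall>n \<in> ?N - ST. clq T' n = clq T n" by blast
  have clc: "clq T' c = (\<Union>n\<in>ST. clq T n) - {v}" using H' by (elim conjE)
  have so0: "\<forall>e\<in>edges T. e \<inter> ST = {} \<longrightarrow> sep T' e = sep T e \<and> sbel T' e = sbel T e" using H' by (elim conjE)
  then have so: "\<forall>e\<in>?E. e \<inter> ST = {} \<longrightarrow> sep T' e = sep T e" by blast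
  have sc: "\<forall>a m. a \<in> ST \<longrightarrow> m \<notin> ST \<longrightarrow> {a, m} \<in> ?E \<longrightarrow> sep T' {c, m} = sep T {a, m}"
  proof -
    have "\<forall>a m. a \<in> ST \<longrightarrow> m \<notin> ST \<longrightarrow> {a, m} \<in> edges T \<longrightarrow>
           sep T' {c, m} = sep T {a, m} \<and> sbel T' {c, m} = sbel T {a, m}" using H' by (elim conjE)
    then show ?thesis by blast
  qed
  have T: "ct_struct T" using V by (rule valid_struct)
  have fN: "finite ?N" using T by (simp add: ct_struct_def)
  have fE: "finite ?E" using T by (rule finite_edges)
  have STN: "ST \<subseteq> ?N" by (auto simp: STd)
  have cST: "conn_on ?E ST" unfolding STd by (rule valid_rip[OF V])
  have fST: "finite ST" using STN fN finite_subset by blast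
  define g where "g n = (if n \<in> ST then c else n)" for n
  have econd: "{g a, g b} \<in> edges T'" if ab: "{a,b} \<in> ?E" "g a \<noteq> g b" for a b
  proof (cases "a \<in> ST")
    case True
    then have bS: "b \<notin> ST" using ab(2) by (auto simp: g_def)
    then have "{g a, g b} = {c, b}" using True by (simp add: g_def)
    then show ?thesis unfolding E' using True bS ab(1) by blast
  next
    case False
    show ?thesis
    proof (cases "b \<in> ST")
      case True
      have ba: "{b,a} \<in> ?E" using ab(1) by (simp add: insert_commute)
      have "{g a, g b} = {c, a}" using True False by (auto simp: g_def)
      then show ?thesis unfolding E' using True False ba by blast
    next
      case False2: False
      then have "{g a, g b} = {a,b}" "{a,b} \<inter> ST = {}" using False by (auto simp: g_def)
      then show ?thesis unfolding E' using ab(1) by simp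
    qed
  qed
  have gN: "g ` ?N = nodes T'" unfolding N' using ne STN cc by (auto simp: g_def)
  have connN: "conn_on (edges T') (nodes T')"
    unfolding gN[symmetric]
    by (rule conn_image2[OF ct_struct_conn[OF T] econd])
  have edge_ne: "e \<noteq> {}" if "e \<in> ?E" for e using ct_struct_edge_ex[OF T that] by blast
  have sub: "edges T' \<subseteq> (\<lambda>e. g ` e) ` (?E - Ein ?E ST)"
  proof
    fix e assume "e \<in> edges T'"
    then consider "e \<in> ?E" "e \<inter> ST = {}" | a m where "e = {c,m}" "a \<in> ST" "m \<notin> ST" "{a, m} \<in> ?E"
      unfolding E' by blast
    then show "e \<in> (\<lambda>e. g ` e) ` (?E - Ein ?E ST)"
    proof cases
      case 1
      then have "g ` e = e" by (auto simp: g_def)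
      moreover have "e \<notin> Ein ?E ST" using 1 edge_ne by (auto simp: Ein_def)
      ultimately show ?thesis using 1 by (auto intro!: image_eqI[where x=e])
    next
      case 2
      have "g ` {a,m} = e" "{a,m} \<notin> Ein ?E ST" using 2 by (auto simp: g_def Ein_def)
      then show ?thesis using 2 by (auto intro!: image_eqI[where x="{a,m}"])
    qed
  qed
  have fE': "finite (edges T')" using finite_subset[OF sub] fE by blast
  have "card (edges T') \<le> card (?E - Ein ?E ST)"
  proof -
    have "card (edges T') \<le> card ((\<lambda>e. g ` e) ` (?E - Ein ?E ST))"
      using sub fE by (intro card_mono) auto
    also have "\<dots> \<le> card (?E - Ein ?E ST)" using fE by (intro card_image_le) auto
    finally show ?thesis .
  qed
  also have "\<dots> = card ?E - card (Ein ?E ST)"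
    by (rule card_Diff_subset) (auto simp: Ein_def intro: finite_subset[OF _ fE])
  finally have up: "card (edges T') \<le> card ?E - card (Ein ?E ST)" .
  have lST: "card ST \<le> card (Ein ?E ST) + 1" using conn_card_lower[OF fST ne cST] .
  have uST: "card (Ein ?E ST) \<le> card ?E" using fE by (intro card_mono) (auto simp: Ein_def)
  have fN': "finite (nodes T')" using N' fN by simp
  have neN': "nodes T' \<noteq> {}" using N' by auto
  have low: "card (nodes T') \<le> card (edges T') + 1"
    using conn_card_lower[OF fN' neN' connN] card_mono[OF fE', of "Ein (edges T') (nodes T')"]
    by (auto simp: Ein_def)
  have cN': "card (nodes T') = card ?N - card ST + 1"
  proof -
    have "card (nodes T') = card (?N - ST) + 1" unfolding N' using cc fN by simp
    moreover have "card (?N - ST) = card ?N - card ST" using STN fST by (simp add: card_Diff_subset)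
    ultimately show ?thesis by simp
  qed
  have cE: "card ?E + 1 = card ?N" using T by (simp add: ct_struct_def)
  have cSTN: "card ST \<le> card ?N" using STN fN by (simp add: card_mono)
  have card: "card (edges T') + 1 = card (nodes T')" using up low cN' cE lST uST cSTN by linarith
  have pairs: "edges T' \<subseteq> {{a, b} | a b. a \<in> nodes T' \<and> b \<in> nodes T' \<and> a \<noteq> b}"
  proof
    fix e assume "e \<in> edges T'"
    then consider "e \<in> ?E" "e \<inter> ST = {}" | a m where "e = {c,m}" "a \<in> ST" "m \<notin> ST" "{a, m} \<in> ?E"
      unfolding E' by blast
    then show "e \<in> {{a, b} | a b. a \<in> nodes T' \<and> b \<in> nodes T' \<and> a \<noteq> b}"
    proof cases
      case 1
      then obtain a b where "e = {a,b}" "a \<noteq> b" "a \<in> ?N" "b \<in> ?N" using ct_struct_edge_ex[OF T] by blast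
      then show ?thesis using 1 N' by auto
    next
      case 2
      have "m \<in> ?N" using ct_struct_edge[OF T 2(4)] by simp
      then have "m \<in> nodes T'" "c \<in> nodes T'" "c \<noteq> m" using N' cc 2 by auto
      then show ?thesis using 2 by blast
    qed
  qed
  have fcl: "\<forall>n\<in>nodes T'. finite (clq T' n)"
  proof
    fix n assume n: "n \<in> nodes T'"
    show "finite (clq T' n)"
    proof (cases "n = c")
      case True
      have "\<forall>k\<in>ST. finite (clq T k)" using T STN unfolding ct_struct_def by blast
      then show ?thesis using True clc fST by simp
    next
      case False
      then have "n \<in> ?N - ST" using n N' by auto
      then show ?thesis using clo ct_struct_clq[OF T] by auto
    qed
  qed
  have st: "ct_struct T'"
    by (rule ct_structI[OF fN' neN' pairs connN card]) (use fcl in blast)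
  have sepc: "sep T' {a,b} \<noteq> {} \<and> sep T' {a,b} = clq T' a \<inter> clq T' b" if ab: "{a,b} \<in> edges T'" for a b
  proof -
    from ab consider "{a,b} \<in> ?E" "{a,b} \<inter> ST = {}"
      | a0 m where "{a,b} = {c,m}" "a0 \<in> ST" "m \<notin> ST" "{a0, m} \<in> ?E"
      unfolding E' by blast
    then show ?thesis
    proof cases
      case 1
      have "a \<in> ?N - ST" "b \<in> ?N - ST" using ct_struct_edge[OF T 1(1)] 1(2) by auto
      moreover have "sep T {a,b} \<noteq> {} \<and> sep T {a,b} = clq T a \<inter> clq T b"
        using valid_sep[OF V 1(1)] .
      ultimately show ?thesis using 1 so clo by auto
    next
      case 2
      have mN: "m \<in> ?N - ST" using ct_struct_edge[OF T 2(4)] 2(3) by auto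
      have sv: "sep T {a0,m} \<noteq> {} \<and> sep T {a0,m} = clq T a0 \<inter> clq T m"
        using valid_sep[OF V 2(4)] .
      have sT': "sep T' {a,b} = sep T {a0,m}" using sc 2 by simp
      have vm: "v \<notin> clq T m" using mN STd by auto
      have a0N: "a0 \<in> ?N" using STN 2(2) by auto
      have "clq T' c \<inter> clq T' m = clq T a0 \<inter> clq T m"
      proof
        show "clq T a0 \<inter> clq T m \<subseteq> clq T' c \<inter> clq T' m"
          using clc clo mN vm 2(2) by auto
      next
        show "clq T' c \<inter> clq T' m \<subseteq> clq T a0 \<inter> clq T m"
        proof
          fix u assume u: "u \<in> clq T' c \<inter> clq T' m"
          then obtain n where n: "n \<in> ST" "u \<in> clq T n" using clc by auto
          have um: "u \<in> clq T m" using u clo mN by auto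
          have "u \<in> clq T a0"
            by (rule key[OF V STN cST 2(2) 2(3) 2(4) n um])
          then show "u \<in> clq T a0 \<inter> clq T m" using um by simp
        qed
      qed
      moreover have "clq T' a \<inter> clq T' b = clq T' c \<inter> clq T' m"
        using 2(1) by (auto simp: doubleton_eq_iff)
      moreover have svA: "sep T {a0,m} = clq T a0 \<inter> clq T m" using sv by blast
      moreover have neX: "clq T a0 \<inter> clq T m \<noteq> {}" using sv by blast
      ultimately show ?thesis using sT' by simp
    qed
  qed
  have rip: "conn_on (edges T') {n \<in> nodes T'. u \<in> clq T' n}" for u
  proof (cases "u = v")
    case True
    have "{n \<in> nodes T'. u \<in> clq T' n} = {}"
    proof -
      have "u \<notin> clq T' n" if "n \<in> nodes T'" for n
      proof (cases "n = c")
        case True then show ?thesis using clc \<open>u = v\<close> by simp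
      next
        case False
        then have "n \<in> ?N - ST" using that N' by auto
        then show ?thesis using clo STd \<open>u = v\<close> by auto
      qed
      then show ?thesis by blast
    qed
    then show ?thesis by (simp only: conn_on_def) blast
  next
    case False
    define Su where "Su = {n \<in> ?N. u \<in> clq T n}"
    have cSu: "conn_on ?E Su" unfolding Su_def by (rule valid_rip[OF V])
    have eq: "g ` Su = {n \<in> nodes T'. u \<in> clq T' n}"
    proof
      show "g ` Su \<subseteq> {n \<in> nodes T'. u \<in> clq T' n}"
      proof
        fix x assume "x \<in> g ` Su"
        then obtain n where n: "n \<in> Su" "x = g n" by blast
        show "x \<in> {n \<in> nodes T'. u \<in> clq T' n}"
        proof (cases "n \<in> ST")
          case True
          then show ?thesis using n clc False N' by (auto simp: g_def Su_def)
        next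
          case F2: False
          then show ?thesis using n clo N' by (auto simp: g_def Su_def)
        qed
      qed
    next
      show "{n \<in> nodes T'. u \<in> clq T' n} \<subseteq> g ` Su"
      proof
        fix x assume x: "x \<in> {n \<in> nodes T'. u \<in> clq T' n}"
        show "x \<in> g ` Su"
        proof (cases "x = c")
          case True
          then obtain n where n: "n \<in> ST" "u \<in> clq T n" using x clc by auto
          then have "n \<in> Su" "g n = x" using STN True by (auto simp: Su_def g_def)
          then show ?thesis by (metis imageI)
        next
          case F2: False
          then have "x \<in> ?N - ST" using x N' by auto
          then have "x \<in> Su" "g x = x" using x clo by (auto simp: Su_def g_def)
          then show ?thesis by (metis imageI)
        qed
      qed
    qed
    show ?thesis unfolding eq[symmetric] by (rule conn_image2[OF cSu econd])
  qed
  show ?thesis by (rule valid_ctI[OF st sepc rip])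
qed

lemma tree_op_valid: "valid_ct T \<Longrightarrow> tree_op D T T' \<Longrightarrow> valid_ct T'"
  unfolding tree_op_def using restrict_valid exact_valid local_valid remove_valid by blast

lemma forest_step_valid:
  assumes "\<forall>T\<in>set F. valid_ct T" "forest_step D F F'"
  shows "\<forall>T\<in>set F'. valid_ct T"
proof -
  from assms(2) obtain i where i: "i < length F"
    and c: "F' = take i F @ drop (Suc i) F \<or> (\<exists>T'. tree_op D (F ! i) T' \<and> F' = F[i := T'])"
    unfolding forest_step_def by blast
  from c show ?thesis
  proof
    assume "F' = take i F @ drop (Suc i) F"
    then show ?thesis using assms(1) by (auto dest: in_set_takeD in_set_dropD)
  next
    assume "\<exists>T'. tree_op D (F ! i) T' \<and> F' = F[i := T']"
    then obtain T' where T': "tree_op D (F ! i) T'" "F' = F[i := T']" by blast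
    have "valid_ct (F ! i)" using assms(1) i by simp
    then have "valid_ct T'" using T' tree_op_valid by blast
    then show ?thesis using assms(1) T' set_update_subset_insert by fastforce
  qed
qed

theorem proposition1:
  fixes D :: "'v \<Rightarrow> 's set"
    and F F' :: "('n, 'v, 's) forest"
  assumes "\<forall>v. finite (D v)"
    and "\<forall>T\<in>set F. ct_struct T \<and> ct_nonneg D T \<and> valid_ct T \<and> calibrated D T"
    and "(forest_step D)\<^sup>*\<^sup>* F F'"
  shows "\<forall>T\<in>set F'. valid_ct T"
  using assms(3)
proof (induction rule: rtranclp_induct)
  case base then show ?case using assms(2) by blast
next
  case (step y z) then show ?case using forest_step_valid by blast
qed

end
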